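(* Fix an integer $k\ge1$ and $p\in(0,1)$. Let $T_{k+1}$ be the number of $k$-simplices of $X(n,p)$ that are critical for the lexicographical matching. Then there exist a constant $C_{p,k}>0$ and an integer $N_{p,k}$, both independent of $n$, such that for all $n\ge N_{p,k}$, \[ \mathrm{Var}(T_{k+1})\ge C_{p,k}\,n^{2k}. \]
   Context: $G(n,p)$ is the random graph on $[n]$ where each of the $\binom n2$ edges is present independently with probability $p$; write $Y_{i,j}=Y_{j,i}$ for the edge indicator of $\{i,j\}$. $X(n,p)$ is the clique complex of $G\sim G(n,p)$: its simplices are the nonempty vertex sets spanning cliques in $G$; a $k$-simplex has $k+1$ vertices. Lexicographical matching on a simplicial complex $\mathcal{L}$: for $s\in\mathcal{L}$ let $I_{\mathcal{L}}(s)=\{j: j<\min(s),\ s\cup\{j\}\in\mathcal{L}\}$; whenever nonempty, pair $s$ with $s\cup\{\min I_{\mathcal{L}}(s)\}$. A simplex is critical if it is in no pair. Explicitly, with $C_{k+1}$ the set of $(k+1)$-subsets of $[n]$ and $s_-=s\setminus\{\min s\}$, \[ T_{k+1}=\sum_{s\in C_{k+1}}\prod_{i\ne j\in s}Y_{i,j}\Bigl[\prod_{i=1}^{\min(s)-1}\Bigl(1-\prod_{j\in s}Y_{i,j}\Bigr)-\prod_{i=1}^{\min(s)-1}\Bigl(1-\prod_{j\in s_-}Y_{i,j}\Bigr)\Bigr]. \] *)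

theory Defs
  imports "HOL-Probability.Probability"
begin

definition edge_set :: "nat \<Rightarrow> nat set set" where
  "edge_set n = {e. \<exists>i j. i \<in> {1..n} \<and> j \<in> {1..n} \<and> i \<noteq> j \<and> e = {i, j}}"

definition Gnp :: "nat \<Rightarrow> real \<Rightarrow> (nat set \<Rightarrow> bool) pmf" where
  "Gnp n p = Pi_pmf (edge_set n) False (\<lambda>_. bernoulli_pmf p)"

definition clique_complex :: "nat \<Rightarrow> (nat set \<Rightarrow> bool) \<Rightarrow> nat set set" where
  "clique_complex n Y = {s. s \<noteq> {} \<and> s \<subseteq> {1..n} \<and> (\<forall>i\<in>s. \<forall>j\<in>s. i \<noteq> j \<longrightarrow> Y {i, j})}"

definition lex_I :: "nat set set \<Rightarrow> nat set \<Rightarrow> nat set" where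
  "lex_I L s = {j. j < Min s \<and> insert j s \<in> L}"

definition lex_pairs :: "nat set set \<Rightarrow> (nat set \<times> nat set) set" where
  "lex_pairs L = {(s, insert (Min (lex_I L s)) s) | s. s \<in> L \<and> lex_I L s \<noteq> {}}"

definition lex_critical :: "nat set set \<Rightarrow> nat set \<Rightarrow> bool" where
  "lex_critical L s = (s \<in> L \<and> (\<forall>(a, b) \<in> lex_pairs L. s \<noteq> a \<and> s \<noteq> b))"

definition T_crit :: "nat \<Rightarrow> nat \<Rightarrow> (nat set \<Rightarrow> bool) \<Rightarrow> nat" where
  "T_crit n k Y = card {s \<in> clique_complex n Y. card s = k + 1 \<and> lex_critical (clique_complex n Y) s}"

end

theory Submission
  imports Defs
begin


lemma int_pair_fin:
  fixes f :: "'a \<times> 'b \<Rightarrow> real"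
  assumes fA: "finite (set_pmf A)" and fB: "finite (set_pmf B)"
  shows "(\<integral>x. f x \<partial>pair_pmf A B) = (\<integral>a. (\<integral>b. f (a,b) \<partial>B) \<partial>A)"
proof -
  have "(\<integral>x. f x \<partial>pair_pmf A B) = (\<Sum>x\<in>set_pmf A \<times> set_pmf B. f x * pmf (pair_pmf A B) x)"
    by (rule integral_measure_pmf_real) (use fA fB in \<open>auto simp: set_pmf_iff pmf_pair\<close>)
  also have "\<dots> = (\<Sum>a\<in>set_pmf A. \<Sum>b\<in>set_pmf B. f (a,b) * pmf B b * pmf A a)"
    by (subst sum.cartesian_product) (auto simp: pmf_pair intro!: sum.cong)
  also have "\<dots> = (\<Sum>a\<in>set_pmf A. (\<Sum>b\<in>set_pmf B. f (a,b) * pmf B b) * pmf A a)"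
    by (simp add: sum_distrib_right)
  also have "\<dots> = (\<integral>a. (\<integral>b. f (a,b) \<partial>B) \<partial>A)"
    apply (subst integral_measure_pmf_real[OF fA, of _ "\<lambda>a. (\<integral>b. f (a,b) \<partial>B)"])
     apply (simp add: set_pmf_iff)
    apply (rule sum.cong, simp)
    apply (subst integral_measure_pmf_real[OF fB])
     apply (auto simp: set_pmf_iff)
    done
  finally show ?thesis .
qed

lemma sq_int_ge:
  fixes g :: "'a \<Rightarrow> real"
  assumes fM: "finite (set_pmf M)"
  shows "(\<integral>y. (g y - c)^2 \<partial>M) \<ge> ((\<integral>y. g y \<partial>M) - c)^2"
proof -
  define a where "a = (\<integral>y. g y \<partial>M)"
  have I: "\<And>h::'a\<Rightarrow>real. integrable M h" by (rule integrable_measure_pmf_finite[OF fM])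
  have e: "\<And>y. (g y - c)^2 = (g y - a)^2 + (2*(a-c)) * (g y - a) + (a-c)^2"
    by (simp add: power2_eq_square algebra_simps)
  have z: "(\<integral>y. (g y - a) \<partial>M) = 0"
    using I by (simp add: a_def prob_space.prob_space[OF prob_space_measure_pmf])
  have "(\<integral>y. (g y - c)^2 \<partial>M) = (\<integral>y. (g y - a)^2 \<partial>M) + (2*(a-c)) * (\<integral>y. (g y - a) \<partial>M) + (a-c)^2"
    unfolding e using I by (simp add: prob_space.prob_space[OF prob_space_measure_pmf])
  also have "\<dots> = (\<integral>y. (g y - a)^2 \<partial>M) + (a-c)^2" using z by simp
  also have "\<dots> \<ge> (a-c)^2" by (simp add: integral_nonneg_AE)
  finally show ?thesis by (simp add: a_def)
qed

lemma var_lower: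
  fixes X :: "bool \<times> 'a \<Rightarrow> real"
  assumes fM: "finite (set_pmf M)" and q: "0 \<le> q" "q \<le> 1"
  shows "measure_pmf.variance (pair_pmf (bernoulli_pmf q) M) X
          \<ge> q*(1-q)*((\<integral>y. X(True,y) \<partial>M) - (\<integral>y. X(False,y) \<partial>M))^2"
proof -
  have fB: "finite (set_pmf (bernoulli_pmf q))" by (rule finite_subset[of _ UNIV]) auto
  define a1 where "a1 = (\<integral>y. X(True,y) \<partial>M)"
  define a0 where "a0 = (\<integral>y. X(False,y) \<partial>M)"
  have mu: "(\<integral>x. X x \<partial>pair_pmf (bernoulli_pmf q) M) = a1 * q + a0 * (1-q)"
    by (simp add: int_pair_fin[OF fB fM] q a0_def a1_def)
  define \<mu> where "\<mu> = a1 * q + a0 * (1-q)"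
  have "measure_pmf.variance (pair_pmf (bernoulli_pmf q) M) X
      = (\<integral>y. (X(True,y) - \<mu>)^2 \<partial>M) * q + (\<integral>y. (X(False,y) - \<mu>)^2 \<partial>M) * (1-q)"
    unfolding mu \<mu>_def[symmetric] by (simp add: int_pair_fin[OF fB fM] q)
  also have "\<dots> \<ge> (a1 - \<mu>)^2 * q + (a0 - \<mu>)^2 * (1-q)"
    using sq_int_ge[OF fM, of "\<lambda>y. X(True,y)" \<mu>] sq_int_ge[OF fM, of "\<lambda>y. X(False,y)" \<mu>] q
    unfolding a0_def a1_def by (intro add_mono mult_right_mono) auto
  also have "(a1 - \<mu>)^2 * q + (a0 - \<mu>)^2 * (1-q) = q*(1-q)*(a1-a0)^2"
    unfolding \<mu>_def by (simp add: power2_eq_square algebra_simps)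
  finally show ?thesis unfolding a0_def a1_def .
qed



lemma cc_finite: "s \<in> clique_complex n Y \<Longrightarrow> finite s"
  unfolding clique_complex_def by (auto intro: finite_subset)

lemma cc_ne: "s \<in> clique_complex n Y \<Longrightarrow> s \<noteq> {}"
  unfolding clique_complex_def by auto

lemma cc_sub: "s \<in> clique_complex n Y \<Longrightarrow> t \<subseteq> s \<Longrightarrow> t \<noteq> {} \<Longrightarrow> t \<in> clique_complex n Y"
  unfolding clique_complex_def by blast

lemma lexI_finite: "finite (lex_I L s)"
  unfolding lex_I_def by (rule finite_subset[of _ "{..<Min s}"]) auto

lemma crit_char:
  assumes sL: "s \<in> clique_complex n Y" and c2: "2 \<le> card s"
  defines "L \<equiv> clique_complex n Y"
  shows "lex_critical L s \<longleftrightarrow> lex_I L s = {} \<and> (\<exists>j<Min s. insert j (s - {Min s}) \<in> L)"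
proof -
  have fs: "finite s" using cc_finite[OF sL] .
  have sne: "s \<noteq> {}" using cc_ne[OF sL] .
  let ?m = "Min s"
  let ?t = "s - {?m}"
  have mins: "?m \<in> s" using fs sne by simp
  have tne: "?t \<noteq> {}"
  proof
    assume "?t = {}" then have "s \<subseteq> {?m}" by blast
    then have "card s \<le> 1" using card_mono[of "{?m}" s] by simp
    then show False using c2 by simp
  qed
  have ft: "finite ?t" using fs by simp
  have tL: "?t \<in> L" unfolding L_def by (rule cc_sub[OF sL]) (use tne in auto)
  have mlt: "?m < Min ?t"
  proof -
    have "Min ?t \<in> ?t" using ft tne by (rule Min_in)
    then have "Min ?t \<in> s" "Min ?t \<noteq> ?m" by blast+
    moreover have "?m \<le> Min ?t" using \<open>Min ?t \<in> s\<close> fs by simp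
    ultimately show ?thesis by simp
  qed
  have ins: "insert ?m ?t = s" using mins by blast
  show ?thesis
  proof
    assume cr: "lex_critical L s"
    have I: "lex_I L s = {}"
    proof (rule ccontr)
      assume "lex_I L s \<noteq> {}"
      then have "(s, insert (Min (lex_I L s)) s) \<in> lex_pairs L"
        using sL unfolding lex_pairs_def L_def by blast
      then show False using cr unfolding lex_critical_def by auto
    qed
    moreover have "\<exists>j<Min s. insert j (s - {Min s}) \<in> L"
    proof (rule ccontr)
      assume nj: "\<not> (\<exists>j<Min s. insert j (s - {Min s}) \<in> L)"
      have mI: "?m \<in> lex_I L ?t" unfolding lex_I_def using mlt ins sL L_def by auto
      then have ne: "lex_I L ?t \<noteq> {}" by blast
      have "Min (lex_I L ?t) = ?m"
      proof (rule antisym)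
        show "Min (lex_I L ?t) \<le> ?m" using mI lexI_finite by simp
        show "?m \<le> Min (lex_I L ?t)"
        proof (rule ccontr)
          assume "\<not> ?m \<le> Min (lex_I L ?t)"
          moreover have "Min (lex_I L ?t) \<in> lex_I L ?t" using ne lexI_finite by simp
          ultimately show False using nj unfolding lex_I_def by auto
        qed
      qed
      then have "(?t, s) \<in> lex_pairs L"
        unfolding lex_pairs_def using tL ne ins by auto
      then show False using cr unfolding lex_critical_def by auto
    qed
    ultimately show "lex_I L s = {} \<and> (\<exists>j<Min s. insert j (s - {Min s}) \<in> L)" by blast
  next
    assume h: "lex_I L s = {} \<and> (\<exists>j<Min s. insert j (s - {Min s}) \<in> L)"
    then obtain j where j: "j < Min s" "insert j (s - {Min s}) \<in> L" by blast
    show "lex_critical L s"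
      unfolding lex_critical_def
    proof (intro conjI ballI)
      show "s \<in> L" using sL L_def by simp
      fix ab assume ab: "ab \<in> lex_pairs L"
      then obtain a where a: "a \<in> L" "lex_I L a \<noteq> {}" "ab = (a, insert (Min (lex_I L a)) a)"
        unfolding lex_pairs_def by blast
      let ?r = "Min (lex_I L a)"
      have rI: "?r \<in> lex_I L a" using a(2) lexI_finite by simp
      have fa: "finite a" "a \<noteq> {}" using a(1) cc_finite cc_ne L_def by auto
      have ra: "?r < Min a" using rI unfolding lex_I_def by simp
      have rna: "?r \<notin> a" using ra fa by auto
      have "s \<noteq> insert ?r a"
      proof
        assume se: "s = insert ?r a"
        have "Min s = min ?r (Min a)" unfolding se using fa by simp
        then have "Min s = ?r" using ra by simp
        then have "s - {Min s} = a" using se rna by auto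
        then have "j \<in> lex_I L a" unfolding lex_I_def using j ra \<open>Min s = ?r\<close> by auto
        then have "?r \<le> j" using lexI_finite by simp
        then show False using j(1) \<open>Min s = ?r\<close> by simp
      qed
      moreover have "s \<noteq> a" using h a(2) by auto
      ultimately show "case ab of (a, b) \<Rightarrow> s \<noteq> a \<and> s \<noteq> b" using a(3) by simp
    qed
  qed
qed



definition good :: "(nat set \<Rightarrow> bool) \<Rightarrow> nat set \<Rightarrow> bool" where
  "good Y s' = ((\<forall>i\<in>insert 2 s'. \<forall>j\<in>insert 2 s'. i \<noteq> j \<longrightarrow> Y {i,j}) \<and> (\<forall>j\<in>s'. Y {1,j}))"

definition Cr :: "nat \<Rightarrow> nat \<Rightarrow> (nat set \<Rightarrow> bool) \<Rightarrow> nat set set" where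
  "Cr n k Y = {s \<in> clique_complex n Y. card s = k + 1 \<and> lex_critical (clique_complex n Y) s}"

lemma T_Cr: "T_crit n k Y = card (Cr n k Y)" unfolding T_crit_def Cr_def by simp

lemma L0_no12:
  assumes "u \<in> clique_complex n (Y({1,2}:=False))" shows "\<not> {1,2} \<subseteq> u"
proof
  assume "{1,2} \<subseteq> u"
  then have "1 \<in> u" "2 \<in> u" by auto
  have cl: "\<forall>i\<in>u. \<forall>j\<in>u. i \<noteq> j \<longrightarrow> (Y({1,2}:=False)) {i,j}"
    using assms unfolding clique_complex_def by (simp del: fun_upd_apply)
  have "(1::nat) \<noteq> 2" by simp
  then have "(Y({1,2}:=False)) {1,2}" using cl \<open>1 \<in> u\<close> \<open>2 \<in> u\<close> by blast
  then show False by simp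
qed

lemma L0_sub_L1: "clique_complex n (Y({1,2}:=False)) \<subseteq> clique_complex n (Y({1,2}:=True))"
proof -
  have m: "\<And>x. (Y({1,2}:=False)) x \<Longrightarrow> (Y({1,2}:=True)) x" by (simp split: if_splits)
  show ?thesis unfolding clique_complex_def
  proof (intro subsetI)
    fix x assume "x \<in> {s. s \<noteq> {} \<and> s \<subseteq> {1..n} \<and> (\<forall>i\<in>s. \<forall>j\<in>s. i \<noteq> j \<longrightarrow> (Y({1,2}:=False)) {i, j})}"
    then show "x \<in> {s. s \<noteq> {} \<and> s \<subseteq> {1..n} \<and> (\<forall>i\<in>s. \<forall>j\<in>s. i \<noteq> j \<longrightarrow> (Y({1,2}:=True)) {i, j})}"
      using m by (simp del: fun_upd_apply)
  qed
qed

lemma pair12: "{i,j} = {1::nat,2} \<Longrightarrow> i \<in> u \<Longrightarrow> j \<in> u \<Longrightarrow> {1,2} \<subseteq> u"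
proof -
  assume h: "{i,j} = {1::nat,2}" "i \<in> u" "j \<in> u"
  have "1 \<in> {i,j}" "2 \<in> {i,j}" using h(1) by blast+
  then show ?thesis using h(2,3) by auto
qed

lemma same_L:
  assumes "\<not> {1,2} \<subseteq> u"
  shows "u \<in> clique_complex n (Y({1,2}:=False)) \<longleftrightarrow> u \<in> clique_complex n (Y({1,2}:=True))"
proof -
  have "\<And>i j. i \<in> u \<Longrightarrow> j \<in> u \<Longrightarrow> {i,j} \<noteq> {1::nat,2}"
    using assms pair12 by blast
  then have eq: "\<And>i j. i \<in> u \<Longrightarrow> j \<in> u \<Longrightarrow> (Y({1,2}:=False)) {i,j} = (Y({1,2}:=True)) {i,j}"
    by simp
  show ?thesis unfolding clique_complex_def mem_Collect_eq using eq by blast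
qed

lemma lexI_mono: "L \<subseteq> L' \<Longrightarrow> lex_I L s \<subseteq> lex_I L' s"
  unfolding lex_I_def by auto

lemma Min_rem_gt: "finite (s::nat set) \<Longrightarrow> x \<in> s - {Min s} \<Longrightarrow> Min s < (x::nat)"
proof -
  assume a: "finite s" "x \<in> s - {Min s}"
  then have "Min s \<le> x" "x \<noteq> Min s" by auto
  then show ?thesis by simp
qed

lemma caseA:
  assumes k: "k \<ge> 1" and s: "s \<in> Cr n k (Y({1,2}:=True))" and no: "\<not> {1,2} \<subseteq> s"
  shows "s \<in> Cr n k (Y({1,2}:=False))"
proof -
  let ?L1 = "clique_complex n (Y({1,2}:=True))"
  let ?L0 = "clique_complex n (Y({1,2}:=False))"
  have sL1: "s \<in> ?L1" and cs: "card s = k+1" and cr: "lex_critical ?L1 s"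
    using s unfolding Cr_def by auto
  have c2: "2 \<le> card s" using cs k by simp
  have sL0: "s \<in> ?L0" using same_L[OF no] sL1 by simp
  have fs: "finite s" using cc_finite[OF sL1] .
  from cr crit_char[OF sL1 c2] obtain j where I1: "lex_I ?L1 s = {}"
    and j: "j < Min s" "insert j (s - {Min s}) \<in> ?L1" by blast
  have I0: "lex_I ?L0 s = {}" using lexI_mono[OF L0_sub_L1, of n Y s] I1 by blast
  have "insert j (s - {Min s}) \<subseteq> {1..n}" using j(2) unfolding clique_complex_def by blast
  then have j1: "j \<ge> 1" by auto
  have nn: "\<not> {1,2} \<subseteq> insert j (s - {Min s})"
  proof
    assume h: "{1,2} \<subseteq> insert j (s - {Min s})"
    have gt: "\<And>x. x \<in> s - {Min s} \<Longrightarrow> Min s < x" using Min_rem_gt[OF fs] by blast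
    have "1 \<in> insert j (s - {Min s})" using h by simp
    then have "1 = j \<or> 1 \<in> s - {Min s}" by simp
    moreover have "1 \<notin> s - {Min s}"
    proof
      assume "1 \<in> s - {Min s}" then have "Min s < 1" using gt by blast
      then show False using j(1) by simp
    qed
    ultimately have "1 = j" by blast
    moreover have "2 \<in> s - {Min s}" using h \<open>1 = j\<close> by auto
    ultimately show False using gt[of 2] j(1) by simp
  qed
  have "insert j (s - {Min s}) \<in> ?L0" using same_L[OF nn, of n Y] j(2) by simp
  then have "lex_critical ?L0 s" using crit_char[OF sL0 c2] I0 j(1) by blast
  then show ?thesis unfolding Cr_def using sL0 cs by simp
qed

lemma caseB:
  assumes k: "k \<ge> 1" and s': "s' \<subseteq> {3..n}" "card s' = k" and g: "good Y s'"
  shows "insert 2 s' \<in> Cr n k (Y({1,2}:=False))" "insert 2 s' \<notin> Cr n k (Y({1,2}:=True))"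
proof -
  let ?L1 = "clique_complex n (Y({1,2}:=True))"
  let ?L0 = "clique_complex n (Y({1,2}:=False))"
  let ?s = "insert 2 s'"
  have fs': "finite s'" using s' finite_subset by blast
  have n2: "2 \<notin> s'" "1 \<notin> s'" using s' by auto
  have s'ne: "s' \<noteq> {}" using s' k by auto
  have n3: "n \<ge> 3" using s'ne s' by auto
  have cs: "card ?s = k+1" using fs' n2 s' by simp
  have c2: "2 \<le> card ?s" using cs k by simp
  have n1s: "\<not> {1,2} \<subseteq> ?s" using n2 by auto
  have ne12: "\<And>i j. i \<in> ?s \<Longrightarrow> j \<in> ?s \<Longrightarrow> {i,j} \<noteq> {1::nat,2}"
    using n1s pair12 by blast
  have ne12b: "\<And>j. j \<in> s' \<Longrightarrow> {1,j} \<noteq> {1::nat,2}"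
  proof
    fix j assume "j \<in> s'" "{1,j} = {1::nat,2}"
    then have "2 \<in> {1,j}" by blast
    then show False using \<open>j \<in> s'\<close> n2 by auto
  qed
  have sub: "?s \<subseteq> {1..n}" using s' n3 by auto
  have gs: "\<And>i j. i \<in> ?s \<Longrightarrow> j \<in> ?s \<Longrightarrow> i \<noteq> j \<Longrightarrow> Y {i,j}" using g unfolding good_def by blast
  have sL0: "?s \<in> ?L0" unfolding clique_complex_def using sub gs ne12 by simp
  have sL1: "?s \<in> ?L1" unfolding clique_complex_def using sub gs ne12 by simp
  have mins: "Min ?s = 2" using fs' s' by (auto intro!: Min_eqI)
  have rem: "?s - {Min ?s} = s'" using mins n2 by auto
  have I0: "lex_I ?L0 ?s = {}"
  proof -
    { fix j assume "j \<in> lex_I ?L0 ?s"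
      then have "j < 2" "insert j ?s \<in> ?L0" unfolding lex_I_def mins by auto
      moreover then have "j \<ge> 1" unfolding clique_complex_def by auto
      ultimately have False using L0_no12[of "insert j ?s" n Y] by (auto simp: numeral_2_eq_2) }
    then show ?thesis by blast
  qed
  have g1: "\<And>j. j \<in> s' \<Longrightarrow> Y {1,j}" using g unfolding good_def by blast
  have sub1: "insert 1 s' \<subseteq> {1..n}" using s' n3 by auto
  have gs1: "\<And>i j. i \<in> insert 1 s' \<Longrightarrow> j \<in> insert 1 s' \<Longrightarrow> i \<noteq> j \<Longrightarrow> (Y({1,2}:=False)) {i,j}"
  proof -
    fix i j assume ij: "i \<in> insert 1 s'" "j \<in> insert 1 s'" "i \<noteq> j"
    show "(Y({1,2}:=False)) {i,j}"
    proof (cases "i = 1")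
      case True then have "j \<in> s'" using ij by auto
      then show ?thesis using g1 ne12b True by simp
    next
      case False note iF = False
      then have i: "i \<in> s'" using ij by auto
      show ?thesis
      proof (cases "j = 1")
        case True then show ?thesis using g1[OF i] ne12b[OF i] by (simp add: insert_commute)
      next
        case False then have "j \<in> s'" using ij by auto
        then show ?thesis using gs[of i j] ne12[of i j] i ij(3) by simp
      qed
    qed
  qed
  have "insert 1 s' \<in> ?L0" unfolding clique_complex_def using sub1 gs1 by blast
  then have "lex_critical ?L0 ?s" using crit_char[OF sL0 c2] I0 mins rem by auto
  then show "?s \<in> Cr n k (Y({1,2}:=False))" unfolding Cr_def using sL0 cs by simp
  have "insert 1 ?s \<in> ?L1"
  proof -
    have "insert 1 ?s = insert 2 (insert 1 s')" by auto
    moreover have "insert 2 (insert 1 s') \<subseteq> {1..n}" using sub1 n3 by auto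
    moreover have "\<forall>i\<in>insert 2 (insert 1 s'). \<forall>j\<in>insert 2 (insert 1 s'). i \<noteq> j \<longrightarrow> (Y({1,2}:=True)) {i,j}"
    proof (intro ballI impI)
      fix i j assume ij: "i \<in> insert 2 (insert 1 s')" "j \<in> insert 2 (insert 1 s')" "i \<noteq> j"
      show "(Y({1,2}:=True)) {i,j}"
      proof (cases "{i,j} = {1,2}")
        case True then show ?thesis by simp
      next
        case False
        have "(Y({1,2}:=False)) {i,j}"
        proof (cases "i \<in> insert 1 s' \<and> j \<in> insert 1 s'")
          case True then show ?thesis using gs1 ij(3) by blast
        next
          case F2: False
          then have "i = 2 \<or> j = 2" using ij by auto
          then have "i \<in> ?s \<and> j \<in> ?s" using ij False by auto
          then show ?thesis using gs ne12 ij(3) by simp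
        qed
        then show ?thesis using False by simp
      qed
    qed
    ultimately show ?thesis unfolding clique_complex_def by simp
  qed
  then have "1 \<in> lex_I ?L1 ?s" unfolding lex_I_def mins by simp
  then have "\<not> lex_critical ?L1 ?s" using crit_char[OF sL1 c2] by auto
  then show "?s \<notin> Cr n k (Y({1,2}:=True))" unfolding Cr_def by simp
qed



definition Wset :: "nat \<Rightarrow> nat \<Rightarrow> (nat set \<Rightarrow> bool) \<Rightarrow> nat set set" where
  "Wset n k Y = {s'. s' \<subseteq> {3..n} \<and> card s' = k \<and> good Y s'}"

definition DD :: "nat \<Rightarrow> nat \<Rightarrow> nat set set" where
  "DD n k = {s. s \<subseteq> {1..n} \<and> card s = k + 1 \<and> {1,2} \<subseteq> s}"

lemma Cr_sub: "Cr n k Y \<subseteq> Pow {1..n}"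
  unfolding Cr_def clique_complex_def by blast

lemma Cr_fin: "finite (Cr n k Y)"
  by (rule finite_subset[OF Cr_sub]) simp

lemma DD_fin: "finite (DD n k)"
  by (rule finite_subset[of _ "Pow {1..n}"]) (auto simp: DD_def)

lemma W_fin: "finite (Wset n k Y)"
  by (rule finite_subset[of _ "Pow {3..n}"]) (auto simp: Wset_def)

lemma count_ineq:
  assumes k: "k \<ge> 1"
  shows "real (T_crit n k (Y({1,2}:=False))) \<ge>
           real (T_crit n k (Y({1,2}:=True))) - real (card (DD n k)) + real (card (Wset n k Y))"
proof -
  let ?C0 = "Cr n k (Y({1,2}:=False))"
  let ?C1 = "Cr n k (Y({1,2}:=True))"
  let ?W = "Wset n k Y"
  let ?D = "DD n k"
  have sub: "(?C1 - ?D) \<union> insert 2 ` ?W \<subseteq> ?C0"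
  proof
    fix s assume "s \<in> (?C1 - ?D) \<union> insert 2 ` ?W"
    then show "s \<in> ?C0"
    proof
      assume s: "s \<in> ?C1 - ?D"
      then have "s \<in> ?C1" by blast
      then have "s \<subseteq> {1..n}" "card s = k+1" using Cr_sub[of n k "Y({1,2}:=True)"] unfolding Cr_def by blast+
      then have "\<not> {1,2} \<subseteq> s" using s unfolding DD_def by blast
      then show ?thesis using caseA[OF k] s by blast
    next
      assume "s \<in> insert 2 ` ?W"
      then obtain s' where "s = insert 2 s'" "s' \<subseteq> {3..n}" "card s' = k" "good Y s'"
        unfolding Wset_def by blast
      then show ?thesis using caseB(1)[OF k] by blast
    qed
  qed
  have disj: "(?C1 - ?D) \<inter> insert 2 ` ?W = {}"
  proof -
    { fix s' assume "s' \<in> ?W"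
      then have "insert 2 s' \<notin> ?C1" using caseB(2)[OF k] unfolding Wset_def by blast }
    then show ?thesis by blast
  qed
  have inj: "inj_on (insert 2) ?W"
  proof
    fix a b assume "a \<in> ?W" "b \<in> ?W" "insert 2 a = insert 2 b"
    moreover have "2 \<notin> a" "2 \<notin> b" using \<open>a \<in> ?W\<close> \<open>b \<in> ?W\<close> unfolding Wset_def by auto
    ultimately show "a = b" by (metis insert_ident)
  qed
  have "card ?C0 \<ge> card ((?C1 - ?D) \<union> insert 2 ` ?W)"
    by (rule card_mono[OF Cr_fin sub])
  also have "card ((?C1 - ?D) \<union> insert 2 ` ?W) = card (?C1 - ?D) + card ?W"
    using card_Un_disjoint[OF _ _ disj] Cr_fin W_fin card_image[OF inj] by simp
  finally have 1: "card ?C0 \<ge> card (?C1 - ?D) + card ?W" .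
  have "card ?C1 \<le> card ((?C1 - ?D) \<union> ?D)" by (rule card_mono) (use Cr_fin DD_fin in auto)
  also have "\<dots> \<le> card (?C1 - ?D) + card ?D" by (rule card_Un_le)
  finally have 2: "card ?C1 \<le> card (?C1 - ?D) + card ?D" .
  from 1 2 show ?thesis unfolding T_Cr by linarith
qed

lemma DD_bound:
  assumes k: "k \<ge> 1"
  shows "card (DD n k) \<le> n ^ (k - 1)"
proof -
  let ?S = "{t. t \<subseteq> {1..n} \<and> card t = k - 1}"
  have "card (DD n k) \<le> card ?S"
  proof (rule card_inj_on_le[where f = "\<lambda>s. s - {1,2}"])
    show "inj_on (\<lambda>s. s - {1,2}) (DD n k)"
    proof
      fix a b assume ab: "a \<in> DD n k" "b \<in> DD n k" "a - {1,2} = b - {1,2}"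
      have "{1,2} \<subseteq> a" "{1,2} \<subseteq> b" using ab(1,2) unfolding DD_def by simp_all
      then have "a = (a - {1,2}) \<union> {1,2}" "b = (b - {1,2}) \<union> {1,2}" by blast+
      then show "a = b" using ab(3) by metis
    qed
    show "(\<lambda>s. s - {1,2}) ` DD n k \<subseteq> ?S"
    proof
      fix t assume "t \<in> (\<lambda>s. s - {1,2}) ` DD n k"
      then obtain s where s: "s \<in> DD n k" "t = s - {1,2}" by blast
      have sd: "s \<subseteq> {1..n}" "card s = k + 1" "{1,2} \<subseteq> s" using s(1) unfolding DD_def by simp_all
      have fs: "finite s" using sd(1) finite_subset by blast
      have "card t = card s - card {1::nat,2}" unfolding s(2) by (rule card_Diff_subset) (use sd in simp_all)
      then have "card t = k - 1" using sd(2) by simp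
      moreover have "t \<subseteq> {1..n}" using sd(1) s(2) by blast
      ultimately show "t \<in> ?S" by simp
    qed
    show "finite ?S" by simp
  qed
  also have "card ?S = n choose (k - 1)" using n_subsets[of "{1..n}" "k-1"] by simp
  also have "\<dots> \<le> n ^ (k - 1)"
  proof (cases "k - 1 \<le> n")
    case True then show ?thesis by (rule binomial_le_pow)
  next
    case False then show ?thesis by (simp add: binomial_eq_0)
  qed
  finally show ?thesis .
qed



lemma edge_fin: "finite (edge_set n)"
  by (rule finite_subset[of _ "Pow {1..n}"]) (auto simp: edge_set_def)

lemma fin_Pi: "finite A \<Longrightarrow> finite (set_pmf (Pi_pmf A False (\<lambda>_. bernoulli_pmf p)))"
  by (subst set_Pi_pmf) (auto intro!: finite_PiE_dflt)

lemma prob_all: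
  fixes p :: real
  assumes A: "finite A" and F: "F \<subseteq> A" and p: "0 \<le> p" "p \<le> 1"
  shows "measure_pmf.prob (Pi_pmf A False (\<lambda>_. bernoulli_pmf p)) {f. \<forall>x\<in>F. f x} \<ge> p ^ card F"
proof -
  let ?B = "\<lambda>x. if x \<in> F then {True} else (UNIV :: bool set)"
  have sub: "PiE_dflt A False ?B \<subseteq> {f. \<forall>x\<in>F. f x}"
    using F unfolding PiE_dflt_def by auto
  have "measure_pmf.prob (Pi_pmf A False (\<lambda>_. bernoulli_pmf p)) (PiE_dflt A False ?B)
        = (\<Prod>x\<in>A. measure_pmf.prob (bernoulli_pmf p) (?B x))"
    by (rule measure_Pi_pmf_PiE_dflt[OF A])
  also have "\<dots> = (\<Prod>x\<in>A. if x \<in> F then p else 1)"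
    by (intro prod.cong) (auto simp: measure_pmf_single p)
  also have "\<dots> = p ^ card F"
    using F A by (simp add: prod.If_cases Int_absorb1)
  finally have "p ^ card F = measure_pmf.prob (Pi_pmf A False (\<lambda>_. bernoulli_pmf p)) (PiE_dflt A False ?B)" by simp
  also have "\<dots> \<le> measure_pmf.prob (Pi_pmf A False (\<lambda>_. bernoulli_pmf p)) {f. \<forall>x\<in>F. f x}"
    by (rule measure_pmf.finite_measure_mono[OF sub]) simp
  finally show ?thesis .
qed

definition Fe :: "nat set \<Rightarrow> nat set set" where
  "Fe s' = {{i,j} | i j. i \<in> insert 2 s' \<and> j \<in> insert 2 s' \<and> i \<noteq> j} \<union> {{1,j} | j. j \<in> s'}"

lemma Fe_good: "\<forall>x\<in>Fe s'. Y x \<Longrightarrow> good Y s'"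
  unfolding Fe_def good_def by blast

lemma Fe_sub:
  assumes "s' \<subseteq> {3..n}"
  shows "Fe s' \<subseteq> edge_set n - {{1,2}}"
proof
  fix x assume "x \<in> Fe s'"
  then consider (a) i j where "x = {i,j}" "i \<in> insert 2 s'" "j \<in> insert 2 s'" "i \<noteq> j"
    | (b) j where "x = {1,j}" "j \<in> s'" unfolding Fe_def by blast
  then show "x \<in> edge_set n - {{1,2}}"
  proof cases
    case a
    have V: "insert 2 s' \<subseteq> {2..n}" if "s' \<noteq> {}" using assms that by force
    have "s' \<noteq> {}" using a by auto
    then have "i \<in> {1..n}" "j \<in> {1..n}" "i \<noteq> 1" "j \<noteq> 1" using a V by auto
    then have "x \<in> edge_set n" unfolding edge_set_def using a by blast
    moreover have "x \<noteq> {1,2}"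
    proof
      assume "x = {1,2}" then have "1 \<in> {i,j}" using a by simp
      then show False using \<open>i \<noteq> 1\<close> \<open>j \<noteq> 1\<close> by simp
    qed
    ultimately show ?thesis by simp
  next
    case b
    have j: "j \<in> {1..n}" "j \<noteq> 1" "j \<noteq> 2" using b assms by auto
    have "x \<in> edge_set n" unfolding edge_set_def using b j
      by (intro CollectI exI[of _ 1] exI[of _ j]) auto
    moreover have "x \<noteq> {1,2}"
    proof
      assume "x = {1,2}" then have "2 \<in> {1,j}" using b by simp
      then show False using j by simp
    qed
    ultimately show ?thesis by simp
  qed
qed

lemma card_ins_le: "finite A \<Longrightarrow> card (insert x A) \<le> Suc (card A)"
  by (simp add: card_insert_if)

lemma Fe_card:
  assumes "finite s'" "card s' = k"
  shows "card (Fe s') \<le> (k+2)^2"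
proof -
  let ?V = "insert 1 (insert 2 s')"
  let ?g = "\<lambda>(i::nat,j::nat). {i,j}"
  have "Fe s' \<subseteq> ?g ` (?V \<times> ?V)"
  proof
    fix x assume "x \<in> Fe s'"
    then consider (a) i j where "x = {i,j}" "i \<in> insert 2 s'" "j \<in> insert 2 s'"
      | (b) j where "x = {1,j}" "j \<in> s'" unfolding Fe_def by blast
    then show "x \<in> ?g ` (?V \<times> ?V)"
    proof cases
      case a then show ?thesis by (intro rev_image_eqI[of "(i,j)"]) auto
    next
      case b then show ?thesis by (intro rev_image_eqI[of "(1,j)"]) auto
    qed
  qed
  moreover have fV: "finite ?V" using assms by simp
  ultimately have "card (Fe s') \<le> card (?g ` (?V \<times> ?V))"
    by (intro card_mono) auto
  also have "\<dots> \<le> card (?V \<times> ?V)" by (rule card_image_le) (use fV in simp)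
  also have "\<dots> = card ?V * card ?V" by (rule card_cartesian_product)
  also have cV: "card ?V \<le> k + 2"
    using card_ins_le[of "insert 2 s'" 1] card_ins_le[of s' 2] assms by simp
  then have "card ?V * card ?V \<le> (k+2)*(k+2)" using mult_le_mono[OF cV cV] by simp
  then have "card ?V * card ?V \<le> (k+2)^2" by (simp only: power2_eq_square)
  finally show ?thesis .
qed



lemma EW:
  fixes p :: real and n k :: nat
  assumes p: "0 \<le> p" "p \<le> 1"
  defines "M \<equiv> Pi_pmf (edge_set n - {{1,2}}) False (\<lambda>_. bernoulli_pmf p)"
  shows "(\<integral>f. real (card (Wset n k f)) \<partial>M) \<ge> real (n - 2 choose k) * p ^ ((k+2)^2)"
proof -
  let ?S = "{s'. s' \<subseteq> {3..n} \<and> card s' = k}"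
  have fS: "finite ?S" by (rule finite_subset[of _ "Pow {3..n}"]) auto
  have cS: "card ?S = n - 2 choose k" using n_subsets[of "{3..n}" k] by simp
  have fA: "finite (edge_set n - {{1,2}})" using edge_fin by simp
  have fM: "finite (set_pmf M)" unfolding M_def by (rule fin_Pi[OF fA])
  have W: "\<And>f. real (card (Wset n k f)) = (\<Sum>s'\<in>?S. indicator {f. good f s'} f)"
  proof -
    fix f
    have "Wset n k f = {s'\<in>?S. good f s'}" unfolding Wset_def by blast
    then have "real (card (Wset n k f)) = real (card {s'\<in>?S. good f s'})" by (simp only:)
    also have "\<dots> = (\<Sum>s'\<in>{s'\<in>?S. good f s'}. 1)" by (rule real_of_card)
    also have "\<dots> = (\<Sum>s'\<in>?S. if good f s' then 1 else 0)" by (rule sum.inter_filter[OF fS])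
    also have "\<dots> = (\<Sum>s'\<in>?S. indicator {f. good f s'} f)" by (intro sum.cong refl) (simp add: indicator_def)
    finally show "real (card (Wset n k f)) = (\<Sum>s'\<in>?S. indicator {f. good f s'} f)" .
  qed
  have "(\<integral>f. real (card (Wset n k f)) \<partial>M) = (\<integral>f. (\<Sum>s'\<in>?S. indicator {f. good f s'} f) \<partial>M)"
    by (simp add: W)
  also have "\<dots> = (\<Sum>s'\<in>?S. (\<integral>f. indicator {f. good f s'} f \<partial>M))"
    by (rule Bochner_Integration.integral_sum) (rule integrable_measure_pmf_finite[OF fM])
  also have "\<dots> = (\<Sum>s'\<in>?S. measure_pmf.prob M {f. good f s'})"
    by simp
  also have "\<dots> \<ge> (\<Sum>s'\<in>?S. p ^ ((k+2)^2))"
  proof (rule sum_mono)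
    fix s' assume s': "s' \<in> ?S"
    have fs': "finite s'" using s' finite_subset by blast
    have "p ^ ((k+2)^2) \<le> p ^ card (Fe s')"
      by (rule power_decreasing[OF Fe_card[OF fs'] p(1) p(2)]) (use s' in simp)
    also have "\<dots> \<le> measure_pmf.prob M {f. \<forall>x\<in>Fe s'. f x}"
      unfolding M_def by (rule prob_all[OF fA Fe_sub p]) (use s' in simp)
    also have "\<dots> \<le> measure_pmf.prob M {f. good f s'}"
      by (rule measure_pmf.finite_measure_mono) (use Fe_good in auto)
    finally show "p ^ ((k+2)^2) \<le> measure_pmf.prob M {f. good f s'}" .
  qed
  finally show ?thesis using cS by simp
qed



lemma asym:
  fixes q :: real and k :: nat
  assumes q: "q > 0" and k: "k \<ge> 1"
  shows "\<exists>c>0. \<exists>N::nat. \<forall>n\<ge>N. real (n - 2 choose k) * q - real n ^ (k - 1) \<ge> c * real n ^ k"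
proof -
  define c0 where "c0 = q / (2 * real k) ^ k"
  have c0: "c0 > 0" using q k unfolding c0_def by simp
  define N where "N = max (k + 4) (nat \<lceil>2 / c0\<rceil> + 1)"
  show ?thesis
  proof (intro exI[of _ "c0/2"] conjI exI[of _ N] allI impI)
    show "c0/2 > 0" using c0 by simp
    fix n assume n: "N \<le> n"
    have nk: "k + 4 \<le> n" using n unfolding N_def by simp
    have nc: "2 / c0 \<le> real n"
    proof -
      have "2 / c0 \<le> real (nat \<lceil>2 / c0\<rceil>)" by (rule real_nat_ceiling_ge)
      moreover have "nat \<lceil>2 / c0\<rceil> + 1 \<le> N" unfolding N_def by (rule max.cobounded2)
      then have "nat \<lceil>2 / c0\<rceil> \<le> n" using n by linarith
      then have "real (nat \<lceil>2 / c0\<rceil>) \<le> real n" by (rule of_nat_mono)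
      ultimately show "2 / c0 \<le> real n" by linarith
    qed
    have npos: "real n > 0" using nk by simp
    have b1: "(real (n-2) / real k) ^ k \<le> real (n - 2 choose k)"
      by (rule binomial_ge_n_over_k_pow_k) (use nk in simp)
    have "real n / (2 * real k) \<le> real (n-2) / real k"
    proof -
      have "real n \<le> 2 * real (n - 2)" using nk by simp
      then show ?thesis using k by (simp add: field_simps)
    qed
    then have "(real n / (2 * real k)) ^ k \<le> (real (n-2) / real k) ^ k"
      by (rule power_mono) (use k in simp)
    then have bb: "(real n / (2 * real k)) ^ k \<le> real (n - 2 choose k)" using b1 by linarith
    have "c0 * real n ^ k = q * (real n / (2 * real k)) ^ k" unfolding c0_def by (simp add: power_divide)
    also have "\<dots> \<le> q * real (n - 2 choose k)" by (rule mult_left_mono[OF bb]) (use q in simp)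
    finally have b2: "c0 * real n ^ k \<le> real (n - 2 choose k) * q" by (simp add: mult.commute)
    have "real n ^ (k - 1) * real n = real n ^ k"
      using k by (metis Suc_diff_1 less_le_trans power_Suc2 zero_less_one)
    moreover have "c0 * real n \<ge> 2" using nc c0 by (simp add: field_simps)
    ultimately have b3: "real n ^ (k - 1) \<le> (c0/2) * real n ^ k"
    proof -
      assume e: "real n ^ (k - 1) * real n = real n ^ k" and cn: "c0 * real n \<ge> 2"
      have "real n ^ (k - 1) * 2 \<le> real n ^ (k - 1) * (c0 * real n)"
        by (rule mult_left_mono[OF cn]) simp
      also have "\<dots> = c0 * real n ^ k" using e by (simp add: algebra_simps)
      finally show ?thesis by simp
    qed
    show "real (n - 2 choose k) * q - real n ^ (k - 1) \<ge> c0 / 2 * real n ^ k"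
      using b2 b3 by simp
  qed
qed



theorem lemma4p4:
  fixes k :: nat and p :: real
  assumes "k \<ge> 1" and "0 < p" and "p < 1"
  shows "\<exists>C > 0. \<exists>N :: nat. \<forall>n \<ge> N.
           measure_pmf.variance (Gnp n p) (\<lambda>Y. real (T_crit n k Y)) \<ge> C * real n ^ (2 * k)"
proof -
  note k = assms(1) and p0 = assms(2) and p1 = assms(3)
  define q where "q = p ^ ((k+2)^2)"
  have q: "q > 0" using p0 unfolding q_def by simp
  obtain c N where c: "c > 0" and cN: "\<forall>n\<ge>N. real (n - 2 choose k) * q - real n ^ (k - 1) \<ge> c * real n ^ k"
    using asym[OF q k] by blast
  show ?thesis
  proof (intro exI[of _ "p*(1-p)*c^2"] conjI exI[of _ "max N 3"] allI impI)
    show "p*(1-p)*c^2 > 0" using p0 p1 c by simp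
    fix n assume n: "max N 3 \<le> n"
    have n3: "n \<ge> 3" and nN: "n \<ge> N" using n by auto
    define e where "e = {1::nat,2}"
    define A where "A = edge_set n - {e}"
    define M where "M = Pi_pmf A False (\<lambda>_. bernoulli_pmf p)"
    define T where "T = (\<lambda>Y. real (T_crit n k Y))"
    have fA: "finite A" unfolding A_def using edge_fin by simp
    have fM: "finite (set_pmf M)" unfolding M_def by (rule fin_Pi[OF fA])
    have eE: "e \<in> edge_set n" unfolding edge_set_def e_def using n3
      by (intro CollectI exI[of _ 1] exI[of _ 2]) auto
    have iA: "insert e A = edge_set n" unfolding A_def using eE by blast
    have G: "Gnp n p = map_pmf (\<lambda>(y,f). f(e:=y)) (pair_pmf (bernoulli_pmf p) M)"
      unfolding Gnp_def M_def iA[symmetric] by (rule Pi_pmf_insert[OF fA]) (simp add: A_def)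
    define X where "X = (\<lambda>x::bool \<times> (nat set \<Rightarrow> bool). T (case x of (y,f) \<Rightarrow> f(e:=y)))"
    have V: "measure_pmf.variance (Gnp n p) T = measure_pmf.variance (pair_pmf (bernoulli_pmf p) M) X"
      unfolding G X_def by simp
    define a1 where "a1 = (\<integral>f. T (f(e:=True)) \<partial>M)"
    define a0 where "a0 = (\<integral>f. T (f(e:=False)) \<partial>M)"
    have VL: "measure_pmf.variance (Gnp n p) T \<ge> p*(1-p)*(a1 - a0)^2"
      unfolding V a0_def a1_def using var_lower[OF fM, of p X] p0 p1 by (simp add: X_def)
    have I: "\<And>h::(nat set \<Rightarrow> bool) \<Rightarrow> real. integrable M h" by (rule integrable_measure_pmf_finite[OF fM])
    have ci: "\<And>f. real (card (Wset n k f)) - real (card (DD n k)) \<le> T (f(e:=False)) - T (f(e:=True))"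
    proof -
      fix f show "real (card (Wset n k f)) - real (card (DD n k)) \<le> T (f(e:=False)) - T (f(e:=True))"
        using count_ineq[OF k, of n f] unfolding T_def e_def by linarith
    qed
    have "a0 - a1 = (\<integral>f. T (f(e:=False)) - T (f(e:=True)) \<partial>M)"
      unfolding a0_def a1_def by (rule Bochner_Integration.integral_diff[symmetric]) (rule I)+
    also have "\<dots> \<ge> (\<integral>f. real (card (Wset n k f)) - real (card (DD n k)) \<partial>M)"
      by (rule integral_mono[OF I I]) (rule ci)
    finally have "a0 - a1 \<ge> (\<integral>f. real (card (Wset n k f)) \<partial>M) - real (card (DD n k))"
      using I by (simp add: prob_space.prob_space[OF prob_space_measure_pmf])
    moreover have "(\<integral>f. real (card (Wset n k f)) \<partial>M) \<ge> real (n - 2 choose k) * q"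
      unfolding M_def A_def e_def q_def using EW[of p n k] p0 p1 by simp
    moreover have "real (card (DD n k)) \<le> real n ^ (k - 1)"
      using DD_bound[OF k, of n] by (metis of_nat_le_iff of_nat_power)
    ultimately have "a0 - a1 \<ge> real (n - 2 choose k) * q - real n ^ (k - 1)" by linarith
    then have d: "a0 - a1 \<ge> c * real n ^ k" using cN nN by fastforce
    have "(c * real n ^ k)^2 \<le> (a0 - a1)^2"
      by (rule power_mono[OF d]) (use c in simp)
    then have "(c * real n ^ k)^2 \<le> (a1 - a0)^2" by (simp add: power2_commute)
    then have "p*(1-p)*(c * real n ^ k)^2 \<le> p*(1-p)*(a1 - a0)^2"
      by (rule mult_left_mono) (use p0 p1 in simp)
    moreover have "(c * real n ^ k)^2 = c^2 * real n ^ (2*k)"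
      by (simp add: power_mult_distrib power_mult[symmetric] mult.commute)
    ultimately show "measure_pmf.variance (Gnp n p) (\<lambda>Y. real (T_crit n k Y)) \<ge> p*(1-p)*c^2 * real n ^ (2 * k)"
      using VL unfolding T_def by (simp add: mult.assoc)
  qed
qed


end
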